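(* Let $1\le p<\infty$ and let $w$ be a weight on $\mathbb{R}^n$. Then $M_0$ is bounded on $\mathcal{LM}^{p}(\varphi,w)$ if and only if $w\in A_0(\mathcal{LM}^{p}(\varphi))$, and this holds if and only if $M_0$ is bounded from $\mathcal{LM}^{p}(\varphi,w)$ to $W\mathcal{LM}^{p}(\varphi,w)$. Moreover, the operator norm in both cases is comparable to $[w]_{A_0(\mathcal{LM}^{p}(\varphi))}$, with constants independent of $w$.
   Context: A weight is a nonnegative locally integrable function on $\mathbb{R}^n$. Let $\varphi$ be a function from the set of Euclidean balls of $\mathbb{R}^n$ to $(0,\infty)$; standing assumptions: $\varphi$ is doubling ($\varphi(2B)\le C\varphi(B)$) and reverse doubling (there are $\delta>0$, $C$ with $\varphi(B_1)/\varphi(B_2)\le C(|B_1|/|B_2|)^\delta$ for balls $B_1\subset B_2$), and characteristic functions of balls belong to $\mathcal{LM}^{p}(\varphi,w)$. $\mathcal{LM}^{p}(\varphi,w)$ consists of measurable $f$ with $\|f\|_{\mathcal{LM}^{p}(\varphi,w)}:=\sup_{R>0}\big(\varphi(B(0,R))^{-1}\int_{B(0,R)}|f|^pw\big)^{1/p}<\infty$; $W\mathcal{LM}^{p}(\varphi,w)$ consists of $f$ with $\sup_{R>0}\sup_{t>0}t\,w(\{x\in B(0,R):|f(x)|>t\})^{1/p}\varphi(B(0,R))^{-1/p}<\infty$. Köthe dual: $\|g\|_{X'}:=\sup\{\int|fg|:\|f\|_X\le1\}$. $M_0f(x):=\sup_{r>|x|}|B(0,r)|^{-1}\int_{|y|<r}|f(y)|\,dy$.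 $[w]_{A_0(\mathcal{LM}^{p}(\varphi))}:=\sup_B\|\chi_B\|_{\mathcal{LM}^{p}(\varphi,w)}\|\chi_B\|_{\mathcal{LM}^{p}(\varphi,w)'}/|B|$ over balls centered at the origin; $A_0(\mathcal{LM}^{p}(\varphi))$ is the class where it is finite. *)

theory Defs
  imports "HOL-Analysis.Analysis"
begin

text \<open>Real powers of extended nonnegative reals (only used with positive exponents):
  infinity stays infinity, finite values use powr.\<close>
definition enn_powr :: "ennreal \<Rightarrow> real \<Rightarrow> ennreal" where
  "enn_powr x a = (if x = \<infinity> then \<infinity> else ennreal (enn2real x powr a))"

definition weight :: "('a::euclidean_space \<Rightarrow> real) \<Rightarrow> bool" where
  "weight w \<longleftrightarrow> (\<forall>x. 0 \<le> w x) \<and> w \<in> borel_measurable lebesgue \<and>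
     (\<forall>K. compact K \<longrightarrow> set_integrable lebesgue K w)"

text \<open>Weighted local Morrey norm of a (nonnegative, extended-valued) function g = |f|.\<close>
definition LM_norm :: "real \<Rightarrow> ('a set \<Rightarrow> real) \<Rightarrow> ('a \<Rightarrow> real) \<Rightarrow>
    ('a::euclidean_space \<Rightarrow> ennreal) \<Rightarrow> ennreal" where
  "LM_norm p \<phi> w g = enn_powr
     (SUP R\<in>{0<..}. (\<integral>\<^sup>+ x\<in>ball 0 R. enn_powr (g x) p * ennreal (w x) \<partial>lebesgue)
                      / ennreal (\<phi> (ball 0 R))) (1 / p)"

text \<open>Weighted weak local Morrey quasi-norm of g = |f|; w(E) is the integral of w over E.\<close>
definition WLM_norm :: "real \<Rightarrow> ('a set \<Rightarrow> real) \<Rightarrow> ('a \<Rightarrow> real) \<Rightarrow>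
    ('a::euclidean_space \<Rightarrow> ennreal) \<Rightarrow> ennreal" where
  "WLM_norm p \<phi> w g =
     (SUP R\<in>{0<..}. SUP t\<in>{0<..}.
        ennreal t
        * enn_powr (\<integral>\<^sup>+ x\<in>{x \<in> ball 0 R. g x > ennreal t}. ennreal (w x) \<partial>lebesgue) (1 / p)
        * ennreal (\<phi> (ball 0 R) powr (- 1 / p)))"

definition LM_dual_norm :: "real \<Rightarrow> ('a set \<Rightarrow> real) \<Rightarrow> ('a \<Rightarrow> real) \<Rightarrow>
    ('a::euclidean_space \<Rightarrow> real) \<Rightarrow> ennreal" where
  "LM_dual_norm p \<phi> w g =
     (SUP f\<in>{f \<in> borel_measurable lebesgue. LM_norm p \<phi> w (\<lambda>x. ennreal \<bar>f x\<bar>) \<le> 1}.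
        \<integral>\<^sup>+ x. ennreal \<bar>f x * g x\<bar> \<partial>lebesgue)"

definition M_zero :: "('a::euclidean_space \<Rightarrow> real) \<Rightarrow> 'a \<Rightarrow> ennreal" where
  "M_zero f x = (SUP r\<in>{r. norm x < r}.
     (\<integral>\<^sup>+ y\<in>ball 0 r. ennreal \<bar>f y\<bar> \<partial>lebesgue) / emeasure lebesgue (ball (0::'a) r))"

definition A0_const :: "real \<Rightarrow> ('a set \<Rightarrow> real) \<Rightarrow> ('a::euclidean_space \<Rightarrow> real) \<Rightarrow> ennreal" where
  "A0_const p \<phi> w = (SUP R\<in>{0<..}.
     LM_norm p \<phi> w (indicator (ball 0 R)) * LM_dual_norm p \<phi> w (indicator (ball 0 R))
     / emeasure lebesgue (ball (0::'a) R))"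

definition bounded_from_LM :: "real \<Rightarrow> ('a set \<Rightarrow> real) \<Rightarrow> ('a \<Rightarrow> real) \<Rightarrow>
    (('a \<Rightarrow> ennreal) \<Rightarrow> ennreal) \<Rightarrow> (('a::euclidean_space \<Rightarrow> real) \<Rightarrow> 'a \<Rightarrow> ennreal) \<Rightarrow> bool" where
  "bounded_from_LM p \<phi> w N2 T \<longleftrightarrow>
     (\<exists>C\<ge>0. \<forall>f \<in> borel_measurable lebesgue. LM_norm p \<phi> w (\<lambda>x. ennreal \<bar>f x\<bar>) < \<infinity> \<longrightarrow>
        N2 (T f) \<le> ennreal C * LM_norm p \<phi> w (\<lambda>x. ennreal \<bar>f x\<bar>))"

definition opnorm_from_LM :: "real \<Rightarrow> ('a set \<Rightarrow> real) \<Rightarrow> ('a \<Rightarrow> real) \<Rightarrow>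
    (('a \<Rightarrow> ennreal) \<Rightarrow> ennreal) \<Rightarrow> (('a::euclidean_space \<Rightarrow> real) \<Rightarrow> 'a \<Rightarrow> ennreal) \<Rightarrow> ennreal" where
  "opnorm_from_LM p \<phi> w N2 T = Inf {ennreal C | C. C \<ge> 0 \<and>
     (\<forall>f \<in> borel_measurable lebesgue. LM_norm p \<phi> w (\<lambda>x. ennreal \<bar>f x\<bar>) < \<infinity> \<longrightarrow>
        N2 (T f) \<le> ennreal C * LM_norm p \<phi> w (\<lambda>x. ennreal \<bar>f x\<bar>))}"

end

theory Submission
  imports Defs
begin


lemma enn_powr_ennreal: "0 \<le> t \<Longrightarrow> enn_powr (ennreal t) a = ennreal (t powr a)"
  by (simp add: enn_powr_def)

lemma enn_powr_top[simp]: "enn_powr top a = top"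
  by (simp add: enn_powr_def)

lemma enn_powr_0[simp]: "enn_powr 0 a = 0"
  by (simp add: enn_powr_def)

lemma enn_powr_1[simp]: "enn_powr 1 a = 1"
  by (simp add: enn_powr_def)

lemma enn_powr_mono: assumes "0 < a" "x \<le> y" shows "enn_powr x a \<le> enn_powr y a"
proof (cases "y = top")
  case False
  then obtain s where s: "y = ennreal s" "0 \<le> s" by (cases y) auto
  have "x \<noteq> top" using assms(2) s by (metis ennreal_neq_top neq_top_trans)
  with assms obtain t where t: "x = ennreal t" "0 \<le> t" "t \<le> s"
    using s by (cases x) (auto simp: ennreal_le_iff)
  show ?thesis using s t assms by (simp add: enn_powr_ennreal powr_mono2 ennreal_leI)
qed simp

lemma enn_powr_inv: assumes "0 < a" shows "enn_powr (enn_powr x a) (1/a) = x"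
proof (cases "x = top")
  case False
  then obtain s where s: "x = ennreal s" "0 \<le> s" by (cases x) auto
  thus ?thesis using assms by (simp add: enn_powr_ennreal powr_powr)
qed simp

lemma enn_powr_mult: assumes "0 < a" shows "enn_powr (x * y) a = enn_powr x a * enn_powr y a"
proof (cases "x = top \<or> y = top")
  case True
  have nz: "enn_powr z a \<noteq> 0" if "z \<noteq> 0" for z
  proof (cases "z = top")
    case False
    then obtain s where "z = ennreal s" "0 \<le> s" by (cases z) auto
    thus ?thesis using that by (simp add: enn_powr_ennreal)
  qed simp
  show ?thesis
  proof (cases "x = 0 \<or> y = 0")
    case True thus ?thesis by (metis enn_powr_0 mult_zero_left mult_zero_right)
  next
    case False
    hence "x * y = top" using \<open>x = top \<or> y = top\<close> ennreal_mult_eq_top_iff by blast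
    moreover have "enn_powr x a * enn_powr y a = top"
      using False nz[of x] nz[of y] \<open>x = top \<or> y = top\<close> ennreal_mult_eq_top_iff enn_powr_top by metis
    ultimately show ?thesis by simp
  qed
next
  case False
  then obtain s t where s: "x = ennreal s" "0 \<le> s" "y = ennreal t" "0 \<le> t"
    by (cases x; cases y) auto
  have "x * y = ennreal (s * t)" using s by (simp add: ennreal_mult)
  hence "enn_powr (x * y) a = ennreal (s powr a * t powr a)"
    using s by (simp add: enn_powr_ennreal powr_mult)
  also have "\<dots> = enn_powr x a * enn_powr y a"
    using s by (simp add: enn_powr_ennreal ennreal_mult)
  finally show ?thesis .
qed

lemma enn_powr_le_iff: assumes "0 < a" shows "enn_powr x a \<le> enn_powr y a \<longleftrightarrow> x \<le> y"
  using enn_powr_mono[OF assms] enn_powr_mono[of "1/a" "enn_powr x a" "enn_powr y a"] assms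
  by (auto simp: enn_powr_inv)

lemma enn_powr_SUP: assumes "0 < a"
  shows "enn_powr (SUP i\<in>I. f i) a = (SUP i\<in>I. enn_powr (f i) a)"
proof (rule antisym)
  show "(SUP i\<in>I. enn_powr (f i) a) \<le> enn_powr (SUP i\<in>I. f i) a"
    by (rule SUP_least, rule enn_powr_mono[OF assms], rule SUP_upper)
  have "(SUP i\<in>I. f i) = (SUP i\<in>I. enn_powr (enn_powr (f i) a) (1/a))"
    using assms by (simp add: enn_powr_inv)
  also have "\<dots> \<le> enn_powr (SUP i\<in>I. enn_powr (f i) a) (1/a)"
    using assms by (intro SUP_least enn_powr_mono) (auto intro: SUP_upper)
  finally have "enn_powr (SUP i\<in>I. f i) a \<le> enn_powr (enn_powr (SUP i\<in>I. enn_powr (f i) a) (1/a)) a"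
    using assms by (rule enn_powr_mono[rotated])
  also have "\<dots> = (SUP i\<in>I. enn_powr (f i) a)"
    using enn_powr_inv[of "1/a" "SUP i\<in>I. enn_powr (f i) a"] assms by simp
  finally show "enn_powr (SUP i\<in>I. f i) a \<le> (SUP i\<in>I. enn_powr (f i) a)" .
qed

lemma enn_powr_le_inv: assumes "0 < a" shows "enn_powr x a \<le> y \<longleftrightarrow> x \<le> enn_powr y (1/a)"
proof -
  have "enn_powr (enn_powr y (1/a)) a = y" using enn_powr_inv[of "1/a" y] assms by simp
  thus ?thesis using enn_powr_le_iff[OF assms, of x "enn_powr y (1/a)"] by simp
qed



lemma div_enn_powr:
  assumes "0 < c" "0 < q"
  shows "enn_powr (X / ennreal c) q = enn_powr X q * ennreal (c powr (-q))"
proof -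
  have "X / ennreal c = X * ennreal (inverse c)"
    using assms by (simp add: divide_ennreal_def inverse_ennreal)
  hence "enn_powr (X / ennreal c) q = enn_powr X q * enn_powr (ennreal (inverse c)) q"
    using assms by (simp add: enn_powr_mult)
  also have "enn_powr (ennreal (inverse c)) q = ennreal (c powr (-q))"
    using assms by (simp add: enn_powr_ennreal powr_minus inverse_powr)
  finally show ?thesis .
qed

lemma LM_pow:
  assumes "0 < p"
  shows "enn_powr (LM_norm p \<phi> w g) p = (SUP R\<in>{0<..}. (\<integral>\<^sup>+ x\<in>ball 0 R. enn_powr (g x) p * ennreal (w x) \<partial>lebesgue) / ennreal (\<phi> (ball 0 R)))"
  unfolding LM_norm_def using enn_powr_inv[of "1/p"] assms by simp

lemma LM_mono:
  assumes "0 < p" "\<And>x. g x \<le> h x"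
  shows "LM_norm p \<phi> w g \<le> LM_norm p \<phi> w h"
  unfolding LM_norm_def
  using assms
  by (intro enn_powr_mono SUP_mono' divide_right_mono_ennreal nn_integral_mono mult_right_mono) auto

lemma open_sets_lebesgue: "open S \<Longrightarrow> S \<in> sets lebesgue"
  by simp

lemma emeasure_ball0:
  assumes "0 \<le> r"
  shows "emeasure lebesgue (ball (0::'a::euclidean_space) r) = ennreal (r ^ DIM('a) * measure lborel (ball (0::'a) 1))"
proof -
  have "emeasure lebesgue (ball (0::'a) r) = ennreal (measure lborel (ball (0::'a) r))"
    using emeasure_lborel_ball_finite[of "0::'a" r] by (simp add: emeasure_eq_ennreal_measure)
  thus ?thesis using content_ball_conv_unit_ball[OF assms, of "0::'a"] by simp
qed

lemma measure_ball0:
  assumes "0 \<le> r"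
  shows "measure lebesgue (ball (0::'a::euclidean_space) r) = r ^ DIM('a) * measure lborel (ball (0::'a) 1)"
  using content_ball_conv_unit_ball[OF assms, of "0::'a"] by simp

lemma unit_ball_pos: "0 < measure lborel (ball (0::'a::euclidean_space) 1)"
  by (simp add: content_ball_pos)

lemma M_zero_level:
  fixes f :: "'a::euclidean_space \<Rightarrow> real"
  shows "{x. c < M_zero f x} = (\<Union>r\<in>{r. c < (\<integral>\<^sup>+ y\<in>ball 0 r. ennreal \<bar>f y\<bar> \<partial>lebesgue) / emeasure lebesgue (ball (0::'a::euclidean_space) r)}. ball 0 r)"
proof (rule set_eqI)
  fix x :: 'a
  show "x \<in> {x. c < M_zero f x} \<longleftrightarrow> x \<in> (\<Union>r\<in>{r. c < (\<integral>\<^sup>+ y\<in>ball 0 r. ennreal \<bar>f y\<bar> \<partial>lebesgue) / emeasure lebesgue (ball (0::'a) r)}. ball 0 r)"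
    unfolding M_zero_def mem_Collect_eq less_SUP_iff by auto
qed

lemma M_zero_level_sets: fixes f :: "'a::euclidean_space \<Rightarrow> real" shows "{x. c < M_zero f x} \<in> sets lebesgue"
proof -
  have "open {x. c < M_zero f x}" by (subst M_zero_level) (rule open_UN, auto)
  thus ?thesis by simp
qed

lemma mult_le_from_below:
  fixes a L Y :: ennreal
  assumes "\<And>t. 0 < t \<Longrightarrow> ennreal t < a \<Longrightarrow> ennreal t * L \<le> Y"
  shows "a * L \<le> Y"
proof (cases "a = 0")
  case True then show ?thesis by simp
next
  case False
  define T where "T = {t. 0 < t \<and> ennreal t < a}"
  have aS: "a = (SUP t\<in>T. ennreal t)"
  proof (rule antisym)
    show "(SUP t\<in>T. ennreal t) \<le> a" unfolding T_def by (auto intro: SUP_least less_imp_le)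
    show "a \<le> (SUP t\<in>T. ennreal t)"
    proof (rule ccontr)
      assume "\<not> a \<le> (SUP t\<in>T. ennreal t)"
      hence lt: "(SUP t\<in>T. ennreal t) < a" by simp
      then obtain z where z: "(SUP t\<in>T. ennreal t) < z" "z < a" using dense by blast
      hence "z \<noteq> top" using top.not_eq_extremum by fastforce
      then obtain t where t: "z = ennreal t" "0 \<le> t" by (cases z) auto
      have "t \<noteq> 0" using z t by (metis ennreal_0 not_less zero_le)
      hence "t \<in> T" using t z unfolding T_def by auto
      hence "ennreal t \<le> (SUP t\<in>T. ennreal t)" by (rule SUP_upper)
      thus False using z t by simp
    qed
  qed
  have "a * L = (SUP t\<in>T. ennreal t) * L" by (rule arg_cong[where f="\<lambda>x. x * L"], rule aS)
  also have "\<dots> = (SUP t\<in>T. ennreal t * L)" by (simp add: SUP_mult_right_ennreal)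
  also have "\<dots> \<le> Y" using assms unfolding T_def by (auto intro: SUP_least)
  finally show ?thesis .
qed



lemma weak_lower:
  fixes \<phi> :: "'a::euclidean_space set \<Rightarrow> real"
  assumes p: "1 \<le> p" and pos: "\<And>c r. 0 < r \<Longrightarrow> 0 < \<phi> (ball c r)" and w: "weight w"
    and bd: "\<forall>f\<in>borel_measurable lebesgue. LM_norm p \<phi> w (\<lambda>x. ennreal \<bar>f x\<bar>) < \<infinity> \<longrightarrow>
        WLM_norm p \<phi> w (M_zero f) \<le> ennreal C * LM_norm p \<phi> w (\<lambda>x. ennreal \<bar>f x\<bar>)"
  shows "A0_const p \<phi> w \<le> ennreal C"
  unfolding A0_const_def
proof (rule SUP_least)
  fix R :: real assume "R \<in> {0<..}" hence R: "0 < R" by simp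
  define B where "B = ball (0::'a) R"
  define m where "m = emeasure lebesgue B"
  define L where "L = LM_norm p \<phi> w (indicator B)"
  define F where "F = {f \<in> borel_measurable lebesgue. LM_norm p \<phi> w (\<lambda>x. ennreal \<bar>f x\<bar>) \<le> 1}"
  define I where "I = (\<lambda>f. \<integral>\<^sup>+ x. ennreal \<bar>f x * indicator B x\<bar> \<partial>lebesgue)"
  have D: "LM_dual_norm p \<phi> w (indicator B) = (SUP f\<in>F. I f)"
    unfolding LM_dual_norm_def F_def I_def ..
  have "L * (SUP f\<in>F. I f) / m = (SUP f\<in>F. L * I f / m)"
    by (simp add: SUP_mult_left_ennreal divide_ennreal_def SUP_mult_right_ennreal)
  also have "\<dots> \<le> ennreal C"
  proof (rule SUP_least)
    fix f assume "f \<in> F"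
    hence fm: "f \<in> borel_measurable lebesgue" and f1: "LM_norm p \<phi> w (\<lambda>x. ennreal \<bar>f x\<bar>) \<le> 1"
      by (auto simp: F_def)
    define a where "a = I f / m"
    have Ia: "I f = (\<integral>\<^sup>+ y\<in>ball 0 R. ennreal \<bar>f y\<bar> \<partial>lebesgue)"
      unfolding I_def B_def by (intro nn_integral_cong) (auto simp: indicator_def)
    have Mx: "a \<le> M_zero f x" if "x \<in> B" for x
      unfolding M_zero_def a_def Ia m_def B_def
      by (rule SUP_upper) (use that B_def in auto)
    have "a * L \<le> WLM_norm p \<phi> w (M_zero f)"
    proof (rule mult_le_from_below)
      fix t assume t: "0 < t" "ennreal t < a"
      have lvl: "ennreal t < M_zero f x" if "x \<in> B" for x using Mx[OF that] t by (meson less_le_trans)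
      have "ennreal t * L = (SUP R'\<in>{0<..}. ennreal t * enn_powr ((\<integral>\<^sup>+ x\<in>ball 0 R'. enn_powr (indicator B x) p * ennreal (w x) \<partial>lebesgue) / ennreal (\<phi> (ball 0 R'))) (1/p))"
        unfolding L_def LM_norm_def using p by (simp add: enn_powr_SUP SUP_mult_left_ennreal)
      also have "\<dots> \<le> WLM_norm p \<phi> w (M_zero f)"
      proof (rule SUP_least)
        fix R' :: real assume "R' \<in> {0<..}" hence R': "0 < R'" by simp
        define E where "E = {x \<in> ball 0 R'. M_zero f x > ennreal t}"
        have J: "(\<integral>\<^sup>+ x\<in>ball 0 R'. enn_powr (indicator B x) p * ennreal (w x) \<partial>lebesgue)
            \<le> (\<integral>\<^sup>+ x\<in>E. ennreal (w x) \<partial>lebesgue)"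
          by (intro nn_integral_mono) (auto simp: indicator_def E_def lvl)
        have phipos: "0 < \<phi> (ball 0 R')" using pos R' by blast
        have "enn_powr ((\<integral>\<^sup>+ x\<in>ball 0 R'. enn_powr (indicator B x) p * ennreal (w x) \<partial>lebesgue) / ennreal (\<phi> (ball 0 R'))) (1/p)
            \<le> enn_powr ((\<integral>\<^sup>+ x\<in>E. ennreal (w x) \<partial>lebesgue) / ennreal (\<phi> (ball 0 R'))) (1/p)"
          using p J by (intro enn_powr_mono divide_right_mono_ennreal) auto
        also have "\<dots> = enn_powr (\<integral>\<^sup>+ x\<in>E. ennreal (w x) \<partial>lebesgue) (1/p) * ennreal (\<phi> (ball 0 R') powr (- 1 / p))"
          using p phipos by (simp add: div_enn_powr)
        finally have "ennreal t * enn_powr ((\<integral>\<^sup>+ x\<in>ball 0 R'. enn_powr (indicator B x) p * ennreal (w x) \<partial>lebesgue) / ennreal (\<phi> (ball 0 R'))) (1/p)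
            \<le> ennreal t * enn_powr (\<integral>\<^sup>+ x\<in>E. ennreal (w x) \<partial>lebesgue) (1/p) * ennreal (\<phi> (ball 0 R') powr (- 1 / p))"
          by (simp add: mult.assoc mult_left_mono)
        also have "\<dots> \<le> WLM_norm p \<phi> w (M_zero f)"
          unfolding WLM_norm_def E_def using R' t
          by (intro SUP_upper2[where i=R'] SUP_upper2[where i=t]) auto
        finally show "ennreal t * enn_powr ((\<integral>\<^sup>+ x\<in>ball 0 R'. enn_powr (indicator B x) p * ennreal (w x) \<partial>lebesgue) / ennreal (\<phi> (ball 0 R'))) (1/p)
            \<le> WLM_norm p \<phi> w (M_zero f)" .
      qed
      finally show "ennreal t * L \<le> WLM_norm p \<phi> w (M_zero f)" .
    qed
    also have "\<dots> \<le> ennreal C * LM_norm p \<phi> w (\<lambda>x. ennreal \<bar>f x\<bar>)"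
      using bd fm f1 by (auto simp: le_less_trans[OF f1])
    also have "\<dots> \<le> ennreal C" using f1 by (metis mult_left_mono mult.right_neutral zero_le)
    finally show "L * I f / m \<le> ennreal C"
      by (simp add: a_def ennreal_times_divide mult.commute)
  qed
  finally show "LM_norm p \<phi> w (indicator (ball 0 R)) * LM_dual_norm p \<phi> w (indicator (ball 0 R))
      / emeasure lebesgue (ball (0::'a) R) \<le> ennreal C"
    using D unfolding L_def m_def B_def by simp
qed

lemma weak_le_strong:
  fixes \<phi> :: "'a::euclidean_space set \<Rightarrow> real"
  assumes p: "1 \<le> p" and pos: "\<And>c r. 0 < r \<Longrightarrow> 0 < \<phi> (ball c r)" and w: "weight w"
    and meas: "\<And>t. {x. ennreal t < g x} \<in> sets lebesgue"
  shows "WLM_norm p \<phi> w g \<le> LM_norm p \<phi> w g"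
  unfolding WLM_norm_def
proof (intro SUP_least)
  fix R t :: real assume "R \<in> {0<..}" "t \<in> {0<..}"
  hence R: "0 < R" and t: "0 < t" by auto
  define E where "E = {x \<in> ball 0 R. g x > ennreal t}"
  have wm: "w \<in> borel_measurable lebesgue" and w0: "\<And>x. 0 \<le> w x" using w by (auto simp: weight_def)
  have Em: "E \<in> sets lebesgue"
  proof -
    have "E = ball 0 R \<inter> {x. ennreal t < g x}" unfolding E_def by auto
    moreover have "ball (0::'a) R \<in> sets lebesgue" by simp
    ultimately show ?thesis using meas[of t] by (simp add: sets.Int)
  qed
  have phipos: "0 < \<phi> (ball 0 R)" using pos R by blast
  have tp: "enn_powr (ennreal (t powr p)) (1/p) = ennreal t"
    using t p by (simp add: enn_powr_ennreal powr_powr)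
  have "ennreal t * enn_powr (\<integral>\<^sup>+ x\<in>E. ennreal (w x) \<partial>lebesgue) (1/p) * ennreal (\<phi> (ball 0 R) powr (- 1 / p))
      = enn_powr (ennreal (t powr p) * (\<integral>\<^sup>+ x\<in>E. ennreal (w x) \<partial>lebesgue) / ennreal (\<phi> (ball 0 R))) (1/p)"
    using p phipos by (simp add: div_enn_powr enn_powr_mult tp)
  also have "\<dots> \<le> enn_powr ((\<integral>\<^sup>+ x\<in>ball 0 R. enn_powr (g x) p * ennreal (w x) \<partial>lebesgue) / ennreal (\<phi> (ball 0 R))) (1/p)"
  proof -
    have "ennreal (t powr p) * (\<integral>\<^sup>+ x\<in>E. ennreal (w x) \<partial>lebesgue)
        = (\<integral>\<^sup>+ x. ennreal (t powr p) * (ennreal (w x) * indicator E x) \<partial>lebesgue)"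
      using Em wm by (subst nn_integral_cmult) auto
    also have "\<dots> \<le> (\<integral>\<^sup>+ x\<in>ball 0 R. enn_powr (g x) p * ennreal (w x) \<partial>lebesgue)"
    proof (intro nn_integral_mono)
      fix x
      show "ennreal (t powr p) * (ennreal (w x) * indicator E x) \<le> enn_powr (g x) p * ennreal (w x) * indicator (ball 0 R) x"
      proof (cases "x \<in> E")
        case True
        hence "ennreal t \<le> g x" by (auto simp: E_def)
        hence "ennreal (t powr p) \<le> enn_powr (g x) p"
          using enn_powr_mono[of p "ennreal t" "g x"] p t by (simp add: enn_powr_ennreal)
        thus ?thesis using True by (auto simp: E_def indicator_def mult_right_mono)
      qed (simp add: indicator_def)
    qed
    finally show ?thesis using p by (intro enn_powr_mono divide_right_mono_ennreal) auto
  qed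
  also have "\<dots> \<le> LM_norm p \<phi> w g"
    unfolding LM_norm_def using p R by (intro enn_powr_mono SUP_upper) auto
  finally show "ennreal t * enn_powr (\<integral>\<^sup>+ x\<in>{x \<in> ball 0 R. g x > ennreal t}. ennreal (w x) \<partial>lebesgue) (1/p) * ennreal (\<phi> (ball 0 R) powr (- 1 / p))
      \<le> LM_norm p \<phi> w g" unfolding E_def .
qed



lemma ball_lebesgue[measurable]: "ball (c::'a::euclidean_space) r \<in> sets lebesgue"
  by simp

lemma LM_scale:
  fixes \<phi> :: "'a::euclidean_space set \<Rightarrow> real"
  assumes p: "0 < p" and c: "0 < c" and fm: "f \<in> borel_measurable lebesgue" and w: "weight w"
  shows "LM_norm p \<phi> w (\<lambda>x. ennreal \<bar>c * f x\<bar>) = ennreal c * LM_norm p \<phi> w (\<lambda>x. ennreal \<bar>f x\<bar>)"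
proof -
  have wm: "w \<in> borel_measurable lebesgue" and w0: "\<And>x. 0 \<le> w x" using w by (auto simp: weight_def)
  note fm[measurable] wm[measurable]
  have int: "(\<integral>\<^sup>+ x\<in>ball 0 R. enn_powr (ennreal \<bar>c * f x\<bar>) p * ennreal (w x) \<partial>lebesgue)
      = ennreal (c powr p) * (\<integral>\<^sup>+ x\<in>ball 0 R. enn_powr (ennreal \<bar>f x\<bar>) p * ennreal (w x) \<partial>lebesgue)" for R
  proof -
    have "(\<integral>\<^sup>+ x\<in>ball 0 R. enn_powr (ennreal \<bar>c * f x\<bar>) p * ennreal (w x) \<partial>lebesgue)
        = (\<integral>\<^sup>+ x. ennreal (c powr p) * (ennreal (\<bar>f x\<bar> powr p) * ennreal (w x) * indicator (ball 0 R) x) \<partial>lebesgue)"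
    proof (intro nn_integral_cong)
      fix x
      have "enn_powr (ennreal \<bar>c * f x\<bar>) p = ennreal ((c * \<bar>f x\<bar>) powr p)"
        using c by (simp add: enn_powr_ennreal abs_mult)
      also have "\<dots> = ennreal (c powr p) * ennreal (\<bar>f x\<bar> powr p)"
        using c by (simp add: powr_mult ennreal_mult)
      finally show "enn_powr (ennreal \<bar>c * f x\<bar>) p * ennreal (w x) * indicator (ball 0 R) x
          = ennreal (c powr p) * (ennreal (\<bar>f x\<bar> powr p) * ennreal (w x) * indicator (ball 0 R) x)"
        by (simp add: mult.assoc)
    qed
    also have "\<dots> = ennreal (c powr p) * (\<integral>\<^sup>+ x. ennreal (\<bar>f x\<bar> powr p) * ennreal (w x) * indicator (ball 0 R) x \<partial>lebesgue)"
      by (intro nn_integral_cmult) measurable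
    also have "\<dots> = ennreal (c powr p) * (\<integral>\<^sup>+ x\<in>ball 0 R. enn_powr (ennreal \<bar>f x\<bar>) p * ennreal (w x) \<partial>lebesgue)"
      by (simp add: enn_powr_ennreal)
    finally show ?thesis .
  qed
  have "LM_norm p \<phi> w (\<lambda>x. ennreal \<bar>c * f x\<bar>) = enn_powr (ennreal (c powr p) *
      (SUP R\<in>{0<..}. (\<integral>\<^sup>+ x\<in>ball 0 R. enn_powr (ennreal \<bar>f x\<bar>) p * ennreal (w x) \<partial>lebesgue) / ennreal (\<phi> (ball 0 R)))) (1/p)"
    unfolding LM_norm_def int by (simp add: SUP_mult_left_ennreal ennreal_times_divide)
  also have "\<dots> = enn_powr (ennreal (c powr p)) (1/p) * LM_norm p \<phi> w (\<lambda>x. ennreal \<bar>f x\<bar>)"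
    unfolding LM_norm_def using p by (simp add: enn_powr_mult)
  also have "enn_powr (ennreal (c powr p)) (1/p) = ennreal c"
    using p c by (simp add: enn_powr_ennreal powr_powr)
  finally show ?thesis .
qed

lemma holder_dual:
  fixes \<phi> :: "'a::euclidean_space set \<Rightarrow> real"
  assumes p: "0 < p" and fm: "f \<in> borel_measurable lebesgue" and w: "weight w"
    and Nf: "LM_norm p \<phi> w (\<lambda>x. ennreal \<bar>f x\<bar>) < \<infinity>"
    and Dfin: "LM_dual_norm p \<phi> w (indicator (ball 0 r)) < \<infinity>"
  shows "(\<integral>\<^sup>+ y\<in>ball 0 r. ennreal \<bar>f y\<bar> \<partial>lebesgue)
      \<le> LM_norm p \<phi> w (\<lambda>x. ennreal \<bar>f x\<bar>) * LM_dual_norm p \<phi> w (indicator (ball 0 r))"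
proof (rule ennreal_le_epsilon)
  fix e :: real assume e: "0 < e"
  note fm[measurable]
  define N where "N = LM_norm p \<phi> w (\<lambda>x. ennreal \<bar>f x\<bar>)"
  define D where "D = LM_dual_norm p \<phi> w (indicator (ball (0::'a) r))"
  define I where "I = (\<integral>\<^sup>+ y\<in>ball 0 r. ennreal \<bar>f y\<bar> \<partial>lebesgue)"
  define n0 where "n0 = enn2real N"
  define d where "d = enn2real D"
  have N: "N = ennreal n0" "0 \<le> n0" using Nf unfolding N_def n0_def by (auto simp: less_top[symmetric])
  have Dd: "D = ennreal d" "0 \<le> d" using Dfin unfolding D_def d_def by (auto simp: less_top[symmetric])
  define c where "c = n0 + e / (d + 1)"
  have c: "0 < c" unfolding c_def using N Dd e by (simp add: add_nonneg_pos)
  define g where "g = (\<lambda>x. (1/c) * f x)"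
  have gm: "g \<in> borel_measurable lebesgue" unfolding g_def by measurable
  have "LM_norm p \<phi> w (\<lambda>x. ennreal \<bar>g x\<bar>) = ennreal (1/c) * N"
    unfolding g_def N_def using LM_scale[OF p _ fm w, of "1/c" \<phi>] c by simp
  also have "\<dots> = ennreal (n0 / c)" using N c by (simp add: ennreal_mult[symmetric])
  also have "\<dots> \<le> 1" using c N e Dd by (simp add: c_def)
  finally have g1: "LM_norm p \<phi> w (\<lambda>x. ennreal \<bar>g x\<bar>) \<le> 1" .
  have "(\<integral>\<^sup>+ x. ennreal \<bar>g x * indicator (ball 0 r) x\<bar> \<partial>lebesgue) \<le> D"
    unfolding D_def LM_dual_norm_def using gm g1 by (intro SUP_upper) auto
  moreover have "(\<integral>\<^sup>+ x. ennreal \<bar>g x * indicator (ball 0 r) x\<bar> \<partial>lebesgue) = ennreal (1/c) * I"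
  proof -
    have "(\<integral>\<^sup>+ x. ennreal \<bar>g x * indicator (ball 0 r) x\<bar> \<partial>lebesgue)
        = (\<integral>\<^sup>+ x. ennreal (1/c) * (ennreal \<bar>f x\<bar> * indicator (ball 0 r) x) \<partial>lebesgue)"
    proof (intro nn_integral_cong)
      fix x
      have "ennreal (1/c) * ennreal \<bar>f x\<bar> = ennreal (1/c * \<bar>f x\<bar>)"
        using c by (subst ennreal_mult[symmetric]) auto
      thus "ennreal \<bar>g x * indicator (ball 0 r) x\<bar> = ennreal (1/c) * (ennreal \<bar>f x\<bar> * indicator (ball 0 r) x)"
        using c by (auto simp: g_def indicator_def abs_mult)
    qed
    also have "\<dots> = ennreal (1/c) * I"
      unfolding I_def by (intro nn_integral_cmult) measurable
    finally show ?thesis .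
  qed
  ultimately have "ennreal (1/c) * I \<le> D" by simp
  hence "ennreal c * (ennreal (1/c) * I) \<le> ennreal c * D" by (rule mult_left_mono) simp
  hence "I \<le> ennreal c * D" using c by (simp add: mult.assoc[symmetric] ennreal_mult[symmetric])
  also have "\<dots> = ennreal (n0 * d + e * (d / (d + 1)))"
    using Dd c by (simp add: ennreal_mult[symmetric] c_def algebra_simps)
  also have "\<dots> \<le> ennreal (n0 * d + e)"
  proof -
    have "d / (d + 1) \<le> 1" using Dd by simp
    hence "e * (d / (d + 1)) \<le> e * 1" using e by (intro mult_left_mono) auto
    thus ?thesis by (intro ennreal_leI) simp
  qed
  also have "\<dots> = N * D + ennreal e" using N Dd e by (simp add: ennreal_mult ennreal_plus[symmetric])
  finally show "I \<le> N * D + ennreal e" .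
qed



lemma div_ennreal_eq: "0 < a \<Longrightarrow> X / ennreal a = X * ennreal (1/a)"
  by (simp add: divide_ennreal_def inverse_ennreal inverse_eq_divide)

lemma avg_bound:
  fixes \<phi> :: "'a::euclidean_space set \<Rightarrow> real" and f :: "'a \<Rightarrow> real"
  assumes p: "1 \<le> p" and w: "weight w" and fm: "f \<in> borel_measurable lebesgue"
    and Nf: "LM_norm p \<phi> w (\<lambda>x. ennreal \<bar>f x\<bar>) < \<infinity>"
    and K: "A0_const p \<phi> w < \<infinity>" and r: "0 < r"
    and Lpos: "0 < LM_norm p \<phi> w (indicator (ball 0 r))"
    and Lfin: "LM_norm p \<phi> w (indicator (ball 0 r)) < \<infinity>"
  shows "(\<integral>\<^sup>+ y\<in>ball 0 r. ennreal \<bar>f y\<bar> \<partial>lebesgue) / emeasure lebesgue (ball (0::'a) r)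
    \<le> ennreal (enn2real (LM_norm p \<phi> w (\<lambda>x. ennreal \<bar>f x\<bar>)) * enn2real (A0_const p \<phi> w)
         / enn2real (LM_norm p \<phi> w (indicator (ball 0 r))))"
proof -
  define L where "L = LM_norm p \<phi> w (indicator (ball (0::'a) r))"
  define D where "D = LM_dual_norm p \<phi> w (indicator (ball (0::'a) r))"
  define N where "N = LM_norm p \<phi> w (\<lambda>x. ennreal \<bar>f x\<bar>)"
  define KK where "KK = A0_const p \<phi> w"
  define I where "I = (\<integral>\<^sup>+ y\<in>ball 0 r. ennreal \<bar>f y\<bar> \<partial>lebesgue)"
  define l where "l = enn2real L"
  define n0 where "n0 = enn2real N"
  define k where "k = enn2real KK"
  define mv where "mv = r ^ DIM('a) * measure lborel (ball (0::'a) 1)"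
  have mv: "0 < mv" unfolding mv_def using r unit_ball_pos by simp
  have m: "emeasure lebesgue (ball (0::'a) r) = ennreal mv" unfolding mv_def using r emeasure_ball0[of r, where 'a='a] by simp
  have Ll: "L = ennreal l" "0 < l" using Lpos Lfin unfolding L_def l_def
    by (auto simp: less_top[symmetric] enn2real_positive_iff)
  have Nn: "N = ennreal n0" "0 \<le> n0" using Nf unfolding N_def n0_def by (auto simp: less_top[symmetric])
  have Kk: "KK = ennreal k" "0 \<le> k" using K unfolding KK_def k_def by (auto simp: less_top[symmetric])
  have hK: "L * D / ennreal mv \<le> KK"
    unfolding KK_def A0_const_def L_def D_def using r m[symmetric] by (intro SUP_upper2[where i=r]) auto
  have Dfin: "D < \<infinity>"
  proof (rule ccontr)
    assume "\<not> D < \<infinity>"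
    hence "D = top" by (simp add: less_top[symmetric])
    hence "L * D / ennreal mv = top" using Ll mv
      by (simp add: div_ennreal_eq ennreal_mult_top ennreal_top_mult)
    thus False using hK Kk by (simp add: top_unique)
  qed
  define d where "d = enn2real D"
  have Dd: "D = ennreal d" "0 \<le> d" using Dfin unfolding d_def by (auto simp: less_top[symmetric])
  have "ennreal (l * d / mv) \<le> ennreal k"
    using hK Ll Dd Kk mv by (simp add: ennreal_mult[symmetric] divide_ennreal)
  hence ldk: "l * d / mv \<le> k" using Kk by (simp add: ennreal_le_iff)
  have "I \<le> N * D" unfolding I_def N_def D_def
    using holder_dual[of p f w \<phi> r] p fm w Nf Dfin by (simp add: D_def)
  also have "\<dots> = ennreal (n0 * d)" using Nn Dd by (simp add: ennreal_mult)
  finally have "I / ennreal mv \<le> ennreal (n0 * d) / ennreal mv" by (rule divide_right_mono_ennreal)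
  also have "\<dots> = ennreal (n0 * d / mv)" using Nn Dd mv by (simp add: divide_ennreal)
  also have "\<dots> \<le> ennreal (n0 * k / l)"
  proof (rule ennreal_leI)
    have "d / mv = (l * d / mv) / l" using Ll by simp
    also have "\<dots> \<le> k / l" using ldk Ll by (intro divide_right_mono) auto
    finally have "n0 * (d / mv) \<le> n0 * (k / l)" using Nn by (intro mult_left_mono) auto
    thus "n0 * d / mv \<le> n0 * k / l" by simp
  qed
  finally show ?thesis unfolding I_def m n0_def k_def l_def N_def KK_def L_def .
qed

lemma w_ball:
  fixes \<phi> :: "'a::euclidean_space set \<Rightarrow> real"
  assumes p: "0 < p" and pos: "\<And>c r. 0 < r \<Longrightarrow> 0 < \<phi> (ball c r)" and s: "0 < s"
  shows "(\<integral>\<^sup>+ x\<in>ball 0 s. ennreal (w x) \<partial>lebesgue)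
    \<le> enn_powr (LM_norm p \<phi> w (indicator (ball (0::'a) s))) p * ennreal (\<phi> (ball 0 s))"
proof -
  define X where "X = (\<integral>\<^sup>+ x\<in>ball (0::'a) s. ennreal (w x) \<partial>lebesgue)"
  have ph: "0 < \<phi> (ball 0 s)" using pos s by blast
  have "X / ennreal (\<phi> (ball 0 s)) \<le> enn_powr (LM_norm p \<phi> w (indicator (ball (0::'a) s))) p"
    unfolding LM_pow[OF p]
  proof (rule SUP_upper2[where i=s])
    show "s \<in> {0<..}" using s by simp
    have "X = (\<integral>\<^sup>+ x\<in>ball 0 s. enn_powr (indicator (ball (0::'a) s) x) p * ennreal (w x) \<partial>lebesgue)"
      unfolding X_def by (intro nn_integral_cong) (simp add: indicator_def)
    thus "X / ennreal (\<phi> (ball 0 s)) \<le> (\<integral>\<^sup>+ x\<in>ball 0 s. enn_powr (indicator (ball (0::'a) s) x) p * ennreal (w x) \<partial>lebesgue) / ennreal (\<phi> (ball 0 s))"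
      by simp
  qed
  hence "X / ennreal (\<phi> (ball 0 s)) * ennreal (\<phi> (ball 0 s))
      \<le> enn_powr (LM_norm p \<phi> w (indicator (ball (0::'a) s))) p * ennreal (\<phi> (ball 0 s))"
    by (rule mult_right_mono) simp
  moreover have "X / ennreal (\<phi> (ball 0 s)) * ennreal (\<phi> (ball 0 s)) = X"
    using ph by (simp add: ennreal_divide_times)
  ultimately show ?thesis unfolding X_def by simp
qed



lemma pointwise:
  fixes \<phi> :: "'a::euclidean_space set \<Rightarrow> real" and f :: "'a \<Rightarrow> real"
  assumes p: "1 \<le> p" and w: "weight w" and fm: "f \<in> borel_measurable lebesgue"
    and Nf: "LM_norm p \<phi> w (\<lambda>x. ennreal \<bar>f x\<bar>) < \<infinity>"
    and K: "A0_const p \<phi> w < \<infinity>"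
    and fin: "\<And>r. 0 < r \<Longrightarrow> LM_norm p \<phi> w (indicator (ball (0::'a) r)) < \<infinity>"
    and s: "0 < s" and x1: "s / 2 \<le> norm x" and x2: "norm x < s"
    and Lpos: "0 < LM_norm p \<phi> w (indicator (ball 0 s))"
  shows "M_zero f x \<le> ennreal (2 ^ DIM('a) * enn2real (LM_norm p \<phi> w (\<lambda>x. ennreal \<bar>f x\<bar>))
      * enn2real (A0_const p \<phi> w) / enn2real (LM_norm p \<phi> w (indicator (ball (0::'a) s))))"
  unfolding M_zero_def
proof (rule SUP_least)
  fix r assume "r \<in> {r. norm x < r}"
  hence xr: "norm x < r" by simp
  have r: "0 < r" using xr norm_ge_zero[of x] by linarith
  define Lf where "Lf = (\<lambda>r. LM_norm p \<phi> w (indicator (ball (0::'a) r)))"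
  define n0 where "n0 = enn2real (LM_norm p \<phi> w (\<lambda>x. ennreal \<bar>f x\<bar>))"
  define k where "k = enn2real (A0_const p \<phi> w)"
  define ls where "ls = enn2real (Lf s)"
  define avg where "avg = (\<lambda>r. (\<integral>\<^sup>+ y\<in>ball 0 r. ennreal \<bar>f y\<bar> \<partial>lebesgue) / emeasure lebesgue (ball (0::'a) r))"
  have n0: "0 \<le> n0" and k: "0 \<le> k" unfolding n0_def k_def by auto
  have ls: "0 < ls" unfolding ls_def Lf_def using Lpos fin[OF s] by (simp add: enn2real_positive_iff)
  have c0: "0 \<le> n0 * k" using n0 k by simp
  have two: "1 \<le> (2::real) ^ DIM('a)" by simp
  have avs: "avg s \<le> ennreal (n0 * k / ls)"
    unfolding avg_def n0_def k_def ls_def Lf_def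
    using avg_bound[OF p w fm Nf K s Lpos fin[OF s]] .
  show "avg r \<le> ennreal (2 ^ DIM('a) * n0 * k / ls)"
  proof (cases "s \<le> r")
    case True
    have "Lf s \<le> Lf r" unfolding Lf_def using p True
      by (intro LM_mono) (auto simp: indicator_def)
    hence Lr: "0 < Lf r" using Lpos unfolding Lf_def by simp
    have lsr: "ls \<le> enn2real (Lf r)" unfolding ls_def
      using \<open>Lf s \<le> Lf r\<close> fin[OF r] by (simp add: Lf_def enn2real_mono)
    have "avg r \<le> ennreal (n0 * k / enn2real (Lf r))"
      unfolding avg_def n0_def k_def Lf_def
      using avg_bound[OF p w fm Nf K r] Lr fin[OF r] by (simp add: Lf_def)
    also have "\<dots> \<le> ennreal (2 ^ DIM('a) * n0 * k / ls)"
    proof (rule ennreal_leI)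
      have "n0 * k / enn2real (Lf r) \<le> n0 * k / ls"
        using lsr ls c0 by (intro divide_left_mono) auto
      also have "\<dots> \<le> 2 ^ DIM('a) * (n0 * k / ls)"
        using mult_right_mono[OF two, of "n0 * k / ls"] c0 ls by simp
      finally show "n0 * k / enn2real (Lf r) \<le> 2 ^ DIM('a) * n0 * k / ls" by simp
    qed
    finally show ?thesis .
  next
    case False
    hence rs: "r < s" by simp
    have s2r: "s \<le> 2 * r" using x1 xr by linarith
    define v where "v = measure lborel (ball (0::'a) 1)"
    have v: "0 < v" unfolding v_def using unit_ball_pos by simp
    have mr: "emeasure lebesgue (ball (0::'a) r) = ennreal (r ^ DIM('a) * v)"
      unfolding v_def using r emeasure_ball0[of r, where 'a='a] by simp
    have ms: "emeasure lebesgue (ball (0::'a) s) = ennreal (s ^ DIM('a) * v)"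
      unfolding v_def using s emeasure_ball0[of s, where 'a='a] by simp
    define Is where "Is = (\<integral>\<^sup>+ y\<in>ball 0 s. ennreal \<bar>f y\<bar> \<partial>lebesgue)"
    have Ir: "(\<integral>\<^sup>+ y\<in>ball 0 r. ennreal \<bar>f y\<bar> \<partial>lebesgue) \<le> Is"
      unfolding Is_def using rs by (intro nn_integral_mono) (auto simp: indicator_def)
    have rv: "0 < r ^ DIM('a) * v" using r v by simp
    have sv: "0 < s ^ DIM('a) * v" using s v by simp
    have ineq: "1 / (r ^ DIM('a) * v) \<le> 2 ^ DIM('a) * (1 / (s ^ DIM('a) * v))"
    proof -
      have "s ^ DIM('a) \<le> (2 * r) ^ DIM('a)" using s2r s by (intro power_mono) auto
      hence "s ^ DIM('a) * v \<le> 2 ^ DIM('a) * (r ^ DIM('a) * v)" using v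
        by (simp add: power_mult_distrib mult.assoc)
      hence "2 ^ DIM('a) / (2 ^ DIM('a) * (r ^ DIM('a) * v)) \<le> 2 ^ DIM('a) / (s ^ DIM('a) * v)"
        using rv sv by (intro divide_left_mono) auto
      thus ?thesis by simp
    qed
    have "avg r \<le> Is / ennreal (r ^ DIM('a) * v)"
      unfolding avg_def mr using Ir by (rule divide_right_mono_ennreal)
    also have "\<dots> = Is * ennreal (1 / (r ^ DIM('a) * v))" using rv by (simp add: div_ennreal_eq)
    also have "\<dots> \<le> Is * ennreal (2 ^ DIM('a) * (1 / (s ^ DIM('a) * v)))"
      using ineq by (intro mult_left_mono ennreal_leI) auto
    also have "\<dots> = ennreal (2 ^ DIM('a)) * avg s"
    proof -
      have "ennreal (2 ^ DIM('a) * (1 / (s ^ DIM('a) * v))) = ennreal (2 ^ DIM('a)) * ennreal (1 / (s ^ DIM('a) * v))"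
        using sv by (intro ennreal_mult) auto
      thus ?thesis unfolding avg_def ms Is_def using sv by (simp only: div_ennreal_eq mult_ac)
    qed
    also have "\<dots> \<le> ennreal (2 ^ DIM('a)) * ennreal (n0 * k / ls)"
      using avs by (rule mult_left_mono) simp
    also have "\<dots> = ennreal (2 ^ DIM('a) * (n0 * k / ls))"
      using c0 ls by (intro ennreal_mult[symmetric]) auto
    also have "\<dots> = ennreal (2 ^ DIM('a) * n0 * k / ls)" by (simp add: mult.assoc)
    finally show ?thesis .
  qed
qed



lemma annulus_exists:
  fixes x :: "'a::euclidean_space"
  assumes R: "0 < R" and x0: "x \<noteq> 0" and xR: "norm x < R"
  shows "\<exists>j. x \<in> ball 0 (R / 2 ^ j) - ball 0 (R / 2 ^ j / 2)"
proof -
  define P where "P = (\<lambda>j::nat. R / 2 ^ j / 2 \<le> norm x)"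
  have nx: "0 < norm x / R" using x0 R by simp
  obtain n where n: "(1/2::real) ^ n < norm x / R" using real_arch_pow_inv[OF nx, of "1/2"] by auto
  have "R / 2 ^ n < norm x" using n R by (simp add: field_simps power_divide)
  moreover have "R / 2 ^ n / 2 \<le> R / 2 ^ n"
  proof -
    have "0 \<le> R / 2 ^ n" using R by simp
    moreover have "\<And>a::real. 0 \<le> a \<Longrightarrow> a / 2 \<le> a" by simp
    ultimately show ?thesis by blast
  qed
  ultimately have "P n" unfolding P_def by linarith
  define j where "j = (LEAST j. P j)"
  have Pj: "P j" unfolding j_def by (rule LeastI[of P n, OF \<open>P n\<close>])
  have "norm x < R / 2 ^ j"
  proof (cases j)
    case 0 thus ?thesis using xR by simp
  next
    case (Suc i)
    hence "\<not> P i" unfolding j_def using not_less_Least[of i P] by (metis lessI j_def)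
    thus ?thesis using Suc unfolding P_def by (simp add: field_simps)
  qed
  thus ?thesis using Pj unfolding P_def by (intro exI[of _ j]) (auto simp: dist_norm)
qed

lemma geom_phi:
  fixes \<phi> :: "'a::euclidean_space set \<Rightarrow> real" and \<delta> Cr :: real
  assumes pos: "\<And>c r. 0 < r \<Longrightarrow> 0 < \<phi> (ball c r)"
    and rd: "\<And>r1 r2. 0 < r1 \<Longrightarrow> r1 \<le> r2 \<Longrightarrow> \<phi> (ball 0 r1) / \<phi> (ball 0 r2)
        \<le> Cr * (measure lebesgue (ball (0::'a) r1) / measure lebesgue (ball (0::'a) r2)) powr \<delta>"
    and R: "0 < R"
  shows "\<phi> (ball (0::'a) (R / 2 ^ j)) \<le> Cr * (2 powr (- (real DIM('a) * \<delta>))) ^ j * \<phi> (ball 0 R)"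
proof -
  define n where "n = DIM('a)"
  define v where "v = measure lborel (ball (0::'a) 1)"
  have v: "0 < v" unfolding v_def using unit_ball_pos by simp
  have r1: "0 < R / 2 ^ j" using R by simp
  have le: "R / 2 ^ j \<le> R" using R by (simp add: divide_le_eq)
  have "measure lebesgue (ball (0::'a) (R / 2 ^ j)) / measure lebesgue (ball (0::'a) R)
      = (R / 2 ^ j) ^ n * v / (R ^ n * v)"
    using measure_ball0[of "R / 2 ^ j", where 'a='a] measure_ball0[of R, where 'a='a] R
    unfolding n_def v_def by simp
  also have "\<dots> = (1 / 2 ^ j) ^ n" using R v by (simp add: field_simps power_divide)
  also have "\<dots> = 2 powr (- (real j * n))"
  proof -
    have e: "(2::real) powr (real j * real n) = 2 ^ (j * n)"
      by (metis of_nat_mult powr_realpow zero_less_numeral)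
    have "(1 / 2 ^ j) ^ n = 1 / (2::real) ^ (j * n)" by (simp add: power_mult power_one_over)
    thus ?thesis using e by (simp add: powr_minus inverse_eq_divide)
  qed
  finally have ratio: "measure lebesgue (ball (0::'a) (R / 2 ^ j)) / measure lebesgue (ball (0::'a) R)
      = 2 powr (- (real j * n))" .
  have "(2 powr (- (real j * n))) powr \<delta> = (2 powr (- (n * \<delta>))) ^ j"
  proof -
    have "(2 powr (- (n * \<delta>))) ^ j = (2::real) powr (real j * (- (n * \<delta>)))"
      by (rule powr_power) simp
    thus ?thesis by (simp add: powr_powr mult_ac)
  qed
  hence "\<phi> (ball 0 (R / 2 ^ j)) / \<phi> (ball 0 R) \<le> Cr * (2 powr (- (n * \<delta>))) ^ j"
    using rd[OF r1 le] ratio by simp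
  thus ?thesis using pos[OF R, of 0] unfolding n_def by (simp add: divide_le_eq)
qed



lemma int_bound:
  fixes \<phi> :: "'a::euclidean_space set \<Rightarrow> real" and \<delta> Cr :: real and f :: "'a \<Rightarrow> real"
  assumes p: "1 \<le> p" and pos: "\<And>c r. 0 < r \<Longrightarrow> 0 < \<phi> (ball c r)" and w: "weight w"
    and fm: "f \<in> borel_measurable lebesgue"
    and Nf: "LM_norm p \<phi> w (\<lambda>x. ennreal \<bar>f x\<bar>) < \<infinity>"
    and K: "A0_const p \<phi> w < \<infinity>"
    and fin: "\<And>r. 0 < r \<Longrightarrow> LM_norm p \<phi> w (indicator (ball (0::'a) r)) < \<infinity>"
    and rd: "\<And>r1 r2. 0 < r1 \<Longrightarrow> r1 \<le> r2 \<Longrightarrow> \<phi> (ball 0 r1) / \<phi> (ball 0 r2)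
        \<le> Cr * (measure lebesgue (ball (0::'a) r1) / measure lebesgue (ball (0::'a) r2)) powr \<delta>"
    and Cr: "0 < Cr" and \<delta>: "0 < \<delta>"
    and R: "0 < R"
  shows "(\<integral>\<^sup>+ x\<in>ball 0 R. enn_powr (M_zero f x) p * ennreal (w x) \<partial>lebesgue)
    \<le> ennreal ((2 ^ DIM('a) * enn2real (LM_norm p \<phi> w (\<lambda>x. ennreal \<bar>f x\<bar>)) * enn2real (A0_const p \<phi> w)) powr p
         * (Cr / (1 - 2 powr (- (real DIM('a) * \<delta>)))) * \<phi> (ball 0 R))"
proof -
  have wm: "w \<in> borel_measurable lebesgue" and w0: "\<And>x. 0 \<le> w x" using w by (auto simp: weight_def)
  note wm[measurable]
  define n0 where "n0 = enn2real (LM_norm p \<phi> w (\<lambda>x. ennreal \<bar>f x\<bar>))"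
  define k where "k = enn2real (A0_const p \<phi> w)"
  define c0 where "c0 = 2 ^ DIM('a) * n0 * k"
  define q :: real where "q = 2 powr (- (real DIM('a) * \<delta>))"
  have c0: "0 \<le> c0" unfolding c0_def n0_def k_def by simp
  have q0: "0 < q" unfolding q_def by simp
  have q1: "q < 1"
  proof -
    have "0 < real DIM('a) * \<delta>" using \<delta> DIM_positive by simp
    hence "(2::real) powr (- (real DIM('a) * \<delta>)) < 2 powr 0" by (intro powr_less_mono) auto
    thus ?thesis unfolding q_def by simp
  qed
  define s where "s = (\<lambda>j::nat. R / 2 ^ j)"
  have s: "0 < s j" for j unfolding s_def using R by simp
  define A where "A = (\<lambda>j. ball (0::'a) (s j) - ball 0 (s j / 2))"
  define Lf where "Lf = (\<lambda>r. LM_norm p \<phi> w (indicator (ball (0::'a) r)))"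
  define l where "l = (\<lambda>r. enn2real (Lf r))"
  define b where "b = (\<lambda>j. if Lf (s j) = 0 then (\<infinity>::ennreal) else ennreal ((c0 / l (s j)) powr p))"
  define wA where "wA = (\<lambda>j. \<integral>\<^sup>+ x\<in>A j. ennreal (w x) \<partial>lebesgue)"
  have Am[measurable]: "A j \<in> sets lebesgue" for j unfolding A_def by simp
  have P1: "enn_powr (M_zero f x) p \<le> b j" if "x \<in> A j" for j x
  proof (cases "Lf (s j) = 0")
    case True thus ?thesis by (simp add: b_def)
  next
    case False
    hence Lpos: "0 < LM_norm p \<phi> w (indicator (ball 0 (s j)))" unfolding Lf_def using not_gr_zero by blast
    have x1: "s j / 2 \<le> norm x" and x2: "norm x < s j" using that unfolding A_def by auto
    have "M_zero f x \<le> ennreal (c0 / l (s j))"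
      using pointwise[OF p w fm Nf K fin s x1 x2 Lpos] unfolding c0_def n0_def k_def l_def Lf_def .
    hence "enn_powr (M_zero f x) p \<le> enn_powr (ennreal (c0 / l (s j))) p"
      using p by (intro enn_powr_mono) auto
    also have "\<dots> = b j" using False c0 unfolding b_def l_def
      by (simp add: enn_powr_ennreal)
    finally show ?thesis .
  qed
  have P2: "AE x in lebesgue. enn_powr (M_zero f x) p * ennreal (w x) * indicator (ball 0 R) x
      \<le> (\<Sum>j. b j * (ennreal (w x) * indicator (A j) x))"
  proof -
    have "AE x in lebesgue. x \<noteq> (0::'a)" by (rule AE_completion[OF AE_lborel_singleton])
    thus ?thesis
    proof (rule AE_mp, intro AE_I2 impI)
      fix x :: 'a assume x0: "x \<noteq> 0"
      show "enn_powr (M_zero f x) p * ennreal (w x) * indicator (ball 0 R) x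
          \<le> (\<Sum>j. b j * (ennreal (w x) * indicator (A j) x))"
      proof (cases "x \<in> ball 0 R")
        case False thus ?thesis by simp
      next
        case True
        then obtain j where j: "x \<in> A j" using annulus_exists[OF R x0] unfolding A_def s_def
          by (auto simp: dist_norm)
        have "enn_powr (M_zero f x) p * ennreal (w x) * indicator (ball 0 R) x
            = enn_powr (M_zero f x) p * (ennreal (w x) * indicator (A j) x)"
          using True j by simp
        also have "\<dots> \<le> b j * (ennreal (w x) * indicator (A j) x)"
          using P1[OF j] by (rule mult_right_mono) simp
        also have "\<dots> \<le> (\<Sum>j. b j * (ennreal (w x) * indicator (A j) x))"
          using sum_le_suminf[of "\<lambda>j. b j * (ennreal (w x) * indicator (A j) x)" "{j}"] by simp
        finally show ?thesis .
      qed
    qed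
  qed
  have "(\<integral>\<^sup>+ x\<in>ball 0 R. enn_powr (M_zero f x) p * ennreal (w x) \<partial>lebesgue)
      \<le> (\<integral>\<^sup>+ x. (\<Sum>j. b j * (ennreal (w x) * indicator (A j) x)) \<partial>lebesgue)"
    using P2 by (rule nn_integral_mono_AE)
  also have "\<dots> = (\<Sum>j. \<integral>\<^sup>+ x. b j * (ennreal (w x) * indicator (A j) x) \<partial>lebesgue)"
    by (rule nn_integral_suminf[of "\<lambda>j x. b j * (ennreal (w x) * indicator (A j) x)"]) measurable
  also have "\<dots> = (\<Sum>j. b j * wA j)"
    unfolding wA_def by (intro suminf_cong nn_integral_cmult) measurable
  also have "\<dots> \<le> (\<Sum>j. ennreal (c0 powr p * \<phi> (ball 0 (s j))))"
  proof (intro suminf_le summableI)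
    fix j
    have wAB: "wA j \<le> (\<integral>\<^sup>+ x\<in>ball 0 (s j). ennreal (w x) \<partial>lebesgue)"
      unfolding wA_def A_def by (intro nn_integral_mono) (auto simp: indicator_def)
    also have "\<dots> \<le> enn_powr (Lf (s j)) p * ennreal (\<phi> (ball 0 (s j)))"
      unfolding Lf_def using w_ball[of p \<phi> "s j" w] p pos s by simp
    finally have wAle: "wA j \<le> enn_powr (Lf (s j)) p * ennreal (\<phi> (ball 0 (s j)))" .
    show "b j * wA j \<le> ennreal (c0 powr p * \<phi> (ball 0 (s j)))"
    proof (cases "Lf (s j) = 0")
      case True
      hence "wA j = 0" using wAle by simp
      thus ?thesis by simp
    next
      case False
      have fl: "Lf (s j) < \<infinity>" unfolding Lf_def using fin[OF s] .
      have "0 < Lf (s j)" using False not_gr_zero by blast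
      hence Ll: "Lf (s j) = ennreal (l (s j))" "0 < l (s j)" using fl unfolding l_def
        by (auto simp: less_top[symmetric] enn2real_positive_iff)
      have ph: "0 < \<phi> (ball 0 (s j))" using pos s by blast
      have "b j * wA j \<le> ennreal ((c0 / l (s j)) powr p) * (ennreal (l (s j) powr p) * ennreal (\<phi> (ball 0 (s j))))"
      proof -
        have "b j = ennreal ((c0 / l (s j)) powr p)" using False unfolding b_def by simp
        moreover have "wA j \<le> ennreal (l (s j) powr p) * ennreal (\<phi> (ball 0 (s j)))"
          using wAle Ll by (simp add: enn_powr_ennreal)
        ultimately show ?thesis by (simp add: mult_left_mono)
      qed
      also have "\<dots> = ennreal ((c0 / l (s j)) powr p * l (s j) powr p * \<phi> (ball 0 (s j)))"
        using ph by (simp add: ennreal_mult mult.assoc)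
      also have "(c0 / l (s j)) powr p * l (s j) powr p = c0 powr p"
        using Ll c0 by (simp add: powr_mult[symmetric])
      finally show ?thesis .
    qed
  qed
  also have "\<dots> \<le> (\<Sum>j. ennreal (c0 powr p * Cr * \<phi> (ball 0 R) * q ^ j))"
  proof (intro suminf_le summableI ennreal_leI)
    fix j
    have "\<phi> (ball 0 (s j)) \<le> Cr * q ^ j * \<phi> (ball 0 R)"
      unfolding s_def q_def using geom_phi[OF pos rd R] .
    hence "c0 powr p * \<phi> (ball 0 (s j)) \<le> c0 powr p * (Cr * q ^ j * \<phi> (ball 0 R))"
      by (intro mult_left_mono) auto
    thus "c0 powr p * \<phi> (ball 0 (s j)) \<le> c0 powr p * Cr * \<phi> (ball 0 R) * q ^ j"
      by (simp add: mult_ac)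
  qed
  also have "\<dots> = ennreal (\<Sum>j. c0 powr p * Cr * \<phi> (ball 0 R) * q ^ j)"
  proof (rule suminf_ennreal2)
    show "0 \<le> c0 powr p * Cr * \<phi> (ball 0 R) * q ^ j" for j
      using Cr pos[OF R, of 0] q0 by simp
    show "summable (\<lambda>j. c0 powr p * Cr * \<phi> (ball 0 R) * q ^ j)"
      using q0 q1 by (intro summable_mult summable_geometric) simp
  qed
  also have "(\<Sum>j. c0 powr p * Cr * \<phi> (ball 0 R) * q ^ j) = c0 powr p * Cr * \<phi> (ball 0 R) * (1 / (1 - q))"
    using q0 q1 by (subst suminf_mult) (auto simp: suminf_geometric)
  also have "\<dots> = c0 powr p * (Cr / (1 - q)) * \<phi> (ball 0 R)" by simp
  finally show ?thesis unfolding c0_def n0_def k_def q_def .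
qed



lemma strong_main:
  fixes \<phi> :: "'a::euclidean_space set \<Rightarrow> real" and \<delta> Cr :: real and f :: "'a \<Rightarrow> real"
  assumes p: "1 \<le> p" and pos: "\<And>c r. 0 < r \<Longrightarrow> 0 < \<phi> (ball c r)" and w: "weight w"
    and fm: "f \<in> borel_measurable lebesgue"
    and Nf: "LM_norm p \<phi> w (\<lambda>x. ennreal \<bar>f x\<bar>) < \<infinity>"
    and K: "A0_const p \<phi> w < \<infinity>"
    and fin: "\<And>r. 0 < r \<Longrightarrow> LM_norm p \<phi> w (indicator (ball (0::'a) r)) < \<infinity>"
    and rd: "\<And>r1 r2. 0 < r1 \<Longrightarrow> r1 \<le> r2 \<Longrightarrow> \<phi> (ball 0 r1) / \<phi> (ball 0 r2)
        \<le> Cr * (measure lebesgue (ball (0::'a) r1) / measure lebesgue (ball (0::'a) r2)) powr \<delta>"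
    and Cr: "0 < Cr" and \<delta>: "0 < \<delta>"
  shows "LM_norm p \<phi> w (M_zero f) \<le> ennreal (2 ^ DIM('a) * (Cr / (1 - 2 powr (- (real DIM('a) * \<delta>)))) powr (1/p)
      * enn2real (A0_const p \<phi> w)) * LM_norm p \<phi> w (\<lambda>x. ennreal \<bar>f x\<bar>)"
proof -
  define n0 where "n0 = enn2real (LM_norm p \<phi> w (\<lambda>x. ennreal \<bar>f x\<bar>))"
  define k where "k = enn2real (A0_const p \<phi> w)"
  define c0 where "c0 = 2 ^ DIM('a) * n0 * k"
  define Cq where "Cq = Cr / (1 - 2 powr (- (real DIM('a) * \<delta>)))"
  have n0: "0 \<le> n0" and k: "0 \<le> k" unfolding n0_def k_def by auto
  have c0: "0 \<le> c0" unfolding c0_def using n0 k by simp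
  have q1: "(2::real) powr (- (real DIM('a) * \<delta>)) < 1"
  proof -
    have "0 < real DIM('a) * \<delta>" using \<delta> DIM_positive by simp
    hence "(2::real) powr (- (real DIM('a) * \<delta>)) < 2 powr 0" by (intro powr_less_mono) auto
    thus ?thesis by simp
  qed
  have Cq: "0 < Cq" unfolding Cq_def using Cr q1 by simp
  have Nn: "LM_norm p \<phi> w (\<lambda>x. ennreal \<bar>f x\<bar>) = ennreal n0"
    using Nf unfolding n0_def by (auto simp: less_top[symmetric])
  have sup: "(SUP R\<in>{0<..}. (\<integral>\<^sup>+ x\<in>ball 0 R. enn_powr (M_zero f x) p * ennreal (w x) \<partial>lebesgue) / ennreal (\<phi> (ball 0 R)))
      \<le> ennreal (c0 powr p * Cq)"
  proof (rule SUP_least)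
    fix R :: real assume "R \<in> {0<..}" hence R: "0 < R" by simp
    have ph: "0 < \<phi> (ball 0 R)" using pos R by blast
    have "(\<integral>\<^sup>+ x\<in>ball 0 R. enn_powr (M_zero f x) p * ennreal (w x) \<partial>lebesgue) / ennreal (\<phi> (ball 0 R))
        \<le> ennreal (c0 powr p * Cq * \<phi> (ball 0 R)) / ennreal (\<phi> (ball 0 R))"
      using int_bound[OF p pos w fm Nf K fin rd Cr \<delta> R] unfolding c0_def n0_def k_def Cq_def
      by (rule divide_right_mono_ennreal)
    also have "\<dots> = ennreal (c0 powr p * Cq)" using ph c0 Cq by (simp add: divide_ennreal)
    finally show "(\<integral>\<^sup>+ x\<in>ball 0 R. enn_powr (M_zero f x) p * ennreal (w x) \<partial>lebesgue) / ennreal (\<phi> (ball 0 R))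
        \<le> ennreal (c0 powr p * Cq)" .
  qed
  have "LM_norm p \<phi> w (M_zero f) \<le> enn_powr (ennreal (c0 powr p * Cq)) (1/p)"
    unfolding LM_norm_def using sup p by (intro enn_powr_mono) auto
  also have "\<dots> = ennreal ((c0 powr p * Cq) powr (1/p))" using c0 Cq by (simp add: enn_powr_ennreal)
  also have "(c0 powr p * Cq) powr (1/p) = c0 * Cq powr (1/p)"
  proof -
    have "(c0 powr p * Cq) powr (1/p) = (c0 powr p) powr (1/p) * Cq powr (1/p)"
      using c0 Cq by (simp add: powr_mult)
    also have "(c0 powr p) powr (1/p) = c0" using p c0 by (simp add: powr_powr)
    finally show ?thesis .
  qed
  also have "ennreal (c0 * Cq powr (1/p)) = ennreal (2 ^ DIM('a) * Cq powr (1/p) * k) * ennreal n0"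
    using n0 k by (simp add: c0_def ennreal_mult[symmetric] mult_ac)
  finally show ?thesis unfolding Nn Cq_def k_def .
qed

theorem proposition6p4:
  fixes \<phi> :: "'a::euclidean_space set \<Rightarrow> real" and p :: real
  assumes p: "1 \<le> p"
    and pos: "\<And>c r. 0 < r \<Longrightarrow> 0 < \<phi> (ball c r)"
    and doubling: "\<exists>C. \<forall>c r. 0 < r \<longrightarrow> \<phi> (ball c (2 * r)) \<le> C * \<phi> (ball c r)"
    and rev_doubling: "\<exists>\<delta>>0. \<exists>C. \<forall>c1 r1 c2 r2. 0 < r1 \<longrightarrow> 0 < r2 \<longrightarrow>
        ball c1 r1 \<subseteq> ball c2 r2 \<longrightarrow>
        \<phi> (ball c1 r1) / \<phi> (ball c2 r2)
          \<le> C * (measure lebesgue (ball c1 r1) / measure lebesgue (ball c2 r2)) powr \<delta>"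
  shows "\<exists>c1>0. \<exists>c2>0. \<forall>w. weight w \<longrightarrow>
      (\<forall>c r. 0 < r \<longrightarrow> LM_norm p \<phi> w (indicator (ball c r)) < \<infinity>) \<longrightarrow>
        (bounded_from_LM p \<phi> w (LM_norm p \<phi> w) M_zero \<longleftrightarrow> A0_const p \<phi> w < \<infinity>)
      \<and> (A0_const p \<phi> w < \<infinity> \<longleftrightarrow> bounded_from_LM p \<phi> w (WLM_norm p \<phi> w) M_zero)
      \<and> ennreal c1 * A0_const p \<phi> w \<le> opnorm_from_LM p \<phi> w (LM_norm p \<phi> w) M_zero
      \<and> opnorm_from_LM p \<phi> w (LM_norm p \<phi> w) M_zero \<le> ennreal c2 * A0_const p \<phi> w
      \<and> ennreal c1 * A0_const p \<phi> w \<le> opnorm_from_LM p \<phi> w (WLM_norm p \<phi> w) M_zero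
      \<and> opnorm_from_LM p \<phi> w (WLM_norm p \<phi> w) M_zero \<le> ennreal c2 * A0_const p \<phi> w"
proof -
  obtain \<delta> Cr0 where \<delta>: "0 < \<delta>" and rd0: "\<forall>c1 r1 c2 r2. 0 < r1 \<longrightarrow> 0 < r2 \<longrightarrow>
        ball c1 r1 \<subseteq> ball c2 r2 \<longrightarrow>
        \<phi> (ball c1 r1) / \<phi> (ball c2 r2)
          \<le> Cr0 * (measure lebesgue (ball c1 r1) / measure lebesgue (ball c2 r2)) powr \<delta>"
    using rev_doubling by blast
  define Cr where "Cr = max Cr0 1"
  have Cr: "0 < Cr" unfolding Cr_def by simp
  have rd: "\<phi> (ball 0 r1) / \<phi> (ball 0 r2)
        \<le> Cr * (measure lebesgue (ball (0::'a) r1) / measure lebesgue (ball (0::'a) r2)) powr \<delta>"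
    if r1: "0 < r1" and le: "r1 \<le> r2" for r1 r2
  proof -
    have sub: "ball (0::'a) r1 \<subseteq> ball 0 r2" using le by (rule subset_ball)
    have "\<phi> (ball 0 r1) / \<phi> (ball 0 r2)
        \<le> Cr0 * (measure lebesgue (ball (0::'a) r1) / measure lebesgue (ball (0::'a) r2)) powr \<delta>"
      by (rule rd0[rule_format]) (use r1 le sub in auto)
    also have "\<dots> \<le> Cr * (measure lebesgue (ball (0::'a) r1) / measure lebesgue (ball (0::'a) r2)) powr \<delta>"
      unfolding Cr_def by (intro mult_right_mono) auto
    finally show ?thesis .
  qed
  define c2 where "c2 = 2 ^ DIM('a) * (Cr / (1 - 2 powr (- (real DIM('a) * \<delta>)))) powr (1/p)"
  have q1: "(2::real) powr (- (real DIM('a) * \<delta>)) < 1"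
  proof -
    have "0 < real DIM('a) * \<delta>" using \<delta> DIM_positive by simp
    hence "(2::real) powr (- (real DIM('a) * \<delta>)) < 2 powr 0" by (intro powr_less_mono) auto
    thus ?thesis by simp
  qed
  have "0 < Cr / (1 - 2 powr (- (real DIM('a) * \<delta>)))" using Cr q1 by simp
  hence c2: "0 < c2" unfolding c2_def by (intro mult_pos_pos) auto
  show ?thesis
  proof (rule exI[of _ "1::real"], rule conjI, simp, rule exI[of _ c2], rule conjI, rule c2, intro allI impI conjI)
    fix w :: "'a \<Rightarrow> real"
    assume w: "weight w" and finc: "\<forall>c r. 0 < r \<longrightarrow> LM_norm p \<phi> w (indicator (ball c r)) < \<infinity>"
    have fin: "\<And>r. 0 < r \<Longrightarrow> LM_norm p \<phi> w (indicator (ball (0::'a) r)) < \<infinity>" using finc[rule_format, of _ "0::'a"] by blast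
    define A where "A = A0_const p \<phi> w"
    define Pw where "Pw = (\<lambda>C. \<forall>f \<in> borel_measurable lebesgue. LM_norm p \<phi> w (\<lambda>x. ennreal \<bar>f x\<bar>) < \<infinity> \<longrightarrow>
        WLM_norm p \<phi> w (M_zero f) \<le> ennreal C * LM_norm p \<phi> w (\<lambda>x. ennreal \<bar>f x\<bar>))"
    define Ps where "Ps = (\<lambda>C. \<forall>f \<in> borel_measurable lebesgue. LM_norm p \<phi> w (\<lambda>x. ennreal \<bar>f x\<bar>) < \<infinity> \<longrightarrow>
        LM_norm p \<phi> w (M_zero f) \<le> ennreal C * LM_norm p \<phi> w (\<lambda>x. ennreal \<bar>f x\<bar>))"
    have WA: "A \<le> ennreal C" if "Pw C" for C
      unfolding A_def by (rule weak_lower[of p \<phi> w C, OF p _ w that[unfolded Pw_def]]) (rule pos)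
    have SW: "Pw C" if "Ps C" for C
      unfolding Pw_def
    proof (intro ballI impI)
      fix f :: "'a \<Rightarrow> real" assume fm: "f \<in> borel_measurable lebesgue"
        and Nf: "LM_norm p \<phi> w (\<lambda>x. ennreal \<bar>f x\<bar>) < \<infinity>"
      have "WLM_norm p \<phi> w (M_zero f) \<le> LM_norm p \<phi> w (M_zero f)"
        by (rule weak_le_strong[of p \<phi> w, OF p _ w M_zero_level_sets]) (rule pos)
      also have "\<dots> \<le> ennreal C * LM_norm p \<phi> w (\<lambda>x. ennreal \<bar>f x\<bar>)"
        using that[unfolded Ps_def, rule_format, OF fm Nf] .
      finally show "WLM_norm p \<phi> w (M_zero f) \<le> ennreal C * LM_norm p \<phi> w (\<lambda>x. ennreal \<bar>f x\<bar>)" .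
    qed
    have AS: "Ps (c2 * enn2real A)" if "A < \<infinity>"
      unfolding Ps_def
    proof (intro ballI impI)
      fix f :: "'a \<Rightarrow> real" assume fm: "f \<in> borel_measurable lebesgue"
        and Nf: "LM_norm p \<phi> w (\<lambda>x. ennreal \<bar>f x\<bar>) < \<infinity>"
      show "LM_norm p \<phi> w (M_zero f) \<le> ennreal (c2 * enn2real A) * LM_norm p \<phi> w (\<lambda>x. ennreal \<bar>f x\<bar>)"
        unfolding A_def c2_def
        by (rule strong_main[of p \<phi> w f Cr \<delta>, OF p _ w fm Nf that[unfolded A_def] fin rd Cr \<delta>]) (rule pos)
    qed
    have cA: "0 \<le> c2 * enn2real A" using c2 by simp
    have opw: "opnorm_from_LM p \<phi> w (WLM_norm p \<phi> w) M_zero = Inf {ennreal C | C. C \<ge> 0 \<and> Pw C}"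
      unfolding opnorm_from_LM_def Pw_def ..
    have ops: "opnorm_from_LM p \<phi> w (LM_norm p \<phi> w) M_zero = Inf {ennreal C | C. C \<ge> 0 \<and> Ps C}"
      unfolding opnorm_from_LM_def Ps_def ..
    have bw: "bounded_from_LM p \<phi> w (WLM_norm p \<phi> w) M_zero \<longleftrightarrow> (\<exists>C\<ge>0. Pw C)"
      unfolding bounded_from_LM_def Pw_def ..
    have bs: "bounded_from_LM p \<phi> w (LM_norm p \<phi> w) M_zero \<longleftrightarrow> (\<exists>C\<ge>0. Ps C)"
      unfolding bounded_from_LM_def Ps_def ..
    have i1: "A \<le> Inf {ennreal C | C. C \<ge> 0 \<and> Pw C}"
      by (rule Inf_greatest) (auto intro: WA)
    have i2: "Inf {ennreal C | C. C \<ge> 0 \<and> Pw C} \<le> Inf {ennreal C | C. C \<ge> 0 \<and> Ps C}"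
      by (rule Inf_superset_mono) (auto intro: SW)
    have i3: "Inf {ennreal C | C. C \<ge> 0 \<and> Ps C} \<le> ennreal c2 * A"
    proof (cases "A < \<infinity>")
      case True
      have "Inf {ennreal C | C. C \<ge> 0 \<and> Ps C} \<le> ennreal (c2 * enn2real A)"
        using AS[OF True] cA by (intro Inf_lower) auto
      also have "\<dots> = ennreal c2 * A" using True c2
        by (simp add: ennreal_mult less_top[symmetric] ennreal_enn2real)
      finally show ?thesis .
    next
      case False
      hence "A = top" by (simp add: less_top[symmetric])
      thus ?thesis using c2 by (simp add: ennreal_mult_top)
    qed
    show "bounded_from_LM p \<phi> w (LM_norm p \<phi> w) M_zero \<longleftrightarrow> A0_const p \<phi> w < \<infinity>"
      unfolding bs A_def[symmetric]
    proof
      assume "\<exists>C\<ge>0. Ps C"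
      then obtain C where "Ps C" by blast
      hence "A \<le> ennreal C" by (intro WA SW)
      thus "A < \<infinity>" using le_less_trans[OF _ ennreal_less_top] by simp
    next
      assume "A < \<infinity>" thus "\<exists>C\<ge>0. Ps C" by (intro exI[of _ "c2 * enn2real A"] conjI cA AS)
    qed
    show "A0_const p \<phi> w < \<infinity> \<longleftrightarrow> bounded_from_LM p \<phi> w (WLM_norm p \<phi> w) M_zero"
      unfolding bw A_def[symmetric]
    proof
      assume "\<exists>C\<ge>0. Pw C"
      then obtain C where "Pw C" by blast
      hence "A \<le> ennreal C" by (rule WA)
      thus "A < \<infinity>" using le_less_trans[OF _ ennreal_less_top] by simp
    next
      assume "A < \<infinity>" thus "\<exists>C\<ge>0. Pw C" by (intro exI[of _ "c2 * enn2real A"] conjI cA SW AS)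
    qed
    show "ennreal 1 * A0_const p \<phi> w \<le> opnorm_from_LM p \<phi> w (LM_norm p \<phi> w) M_zero"
      unfolding ops A_def[symmetric] using order_trans[OF i1 i2] by simp
    show "opnorm_from_LM p \<phi> w (LM_norm p \<phi> w) M_zero \<le> ennreal c2 * A0_const p \<phi> w"
      unfolding ops A_def[symmetric] using i3 .
    show "ennreal 1 * A0_const p \<phi> w \<le> opnorm_from_LM p \<phi> w (WLM_norm p \<phi> w) M_zero"
      unfolding opw A_def[symmetric] using i1 by simp
    show "opnorm_from_LM p \<phi> w (WLM_norm p \<phi> w) M_zero \<le> ennreal c2 * A0_const p \<phi> w"
      unfolding opw A_def[symmetric] using order_trans[OF i2 i3] by simp
  qed
qed

end
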